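(* Let $H$ be a subdirect product of $H_1 \times H_2$ with projections $\pi_1\colon H \to H_1$ and $\pi_2\colon H \to H_2$. Assume that $N$ is a soluble normal subgroup of $H$ such that $H/N \cong T^\ell$, where $T$ is a nonabelian simple group and $\ell$ is a positive integer. Then there exist integers $\ell_1, \ell_2 \geq 0$ with $\ell_1 + \ell_2 \geq \ell$ such that $H_1/N\pi_1 \cong T^{\ell_1}$ and $H_2/N\pi_2 \cong T^{\ell_2}$.
   Context: $H$ is a subdirect product of $H_1\times H_2$ means $H \leq H_1\times H_2$ and both coordinate projections restricted to $H$ are surjective. $N\pi_i$ denotes the image of $N$ under $\pi_i$. *)

theory Defs
  imports "HOL-Algebra.Algebra"
begin

abbreviation power_group :: "('a, 'b) monoid_scheme \<Rightarrow> nat \<Rightarrow> (nat \<Rightarrow> 'a) monoid"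
  where "power_group T l \<equiv> product_group {..<l} (\<lambda>_. T)"

end

theory Submission
  imports Defs
begin
lemma preimage_normal:
  assumes "group_hom G K h" "S \<lhd> K"
  shows "{x \<in> carrier G. h x \<in> S} \<lhd> G"
proof -
  interpret h: group_hom G K h by fact
  interpret S: normal S K by fact
  have hom: "(\<lambda>x. S #>\<^bsub>K\<^esub> h x) \<in> hom G (K Mod S)"
    using hom_compose[OF h.homh S.r_coset_hom_Mod] by (simp add: o_def)
  have gh: "group_hom G (K Mod S) (\<lambda>x. S #>\<^bsub>K\<^esub> h x)"
    by (intro group_hom.intro group_hom_axioms.intro hom h.G.group_axioms S.factorgroup_is_group)
  have "kernel G (K Mod S) (\<lambda>x. S #>\<^bsub>K\<^esub> h x) = {x \<in> carrier G. h x \<in> S}"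
    unfolding kernel_def one_FactGroup
  proof (intro Collect_cong conj_cong refl)
    fix x assume x: "x \<in> carrier G"
    show "(S #>\<^bsub>K\<^esub> h x = S) = (h x \<in> S)"
      using h.H.coset_join1[of S "h x"] h.H.coset_join2[of "h x" S] S.subgroup_axioms x by auto
  qed
  then show ?thesis using group_hom.normal_kernel[OF gh] by simp
qed

lemma descent:
  assumes G: "group G" and Q: "group Q" and K: "group K"
    and p: "p \<in> hom G Q" "p ` carrier G = carrier Q"
    and f: "f \<in> hom G K" "f ` carrier G = carrier K"
    and c: "\<And>g. g \<in> carrier G \<Longrightarrow> p g = \<one>\<^bsub>Q\<^esub> \<Longrightarrow> f g = \<one>\<^bsub>K\<^esub>"
  shows "\<exists>\<theta>. \<theta> \<in> hom Q K \<and> \<theta> ` carrier Q = carrier K \<and> kernel Q K \<theta> = p ` kernel G K f"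
proof -
  interpret p: group_hom G Q p using G Q p by (simp add: group_hom_def group_hom_axioms_def)
  interpret f: group_hom G K f using G K f by (simp add: group_hom_def group_hom_axioms_def)
  have wd: "f g = f g'" if "g \<in> carrier G" "g' \<in> carrier G" "p g = p g'" for g g'
  proof -
    have "p (g \<otimes>\<^bsub>G\<^esub> inv\<^bsub>G\<^esub> g') = \<one>\<^bsub>Q\<^esub>" using that by simp
    then have "f (g \<otimes>\<^bsub>G\<^esub> inv\<^bsub>G\<^esub> g') = \<one>\<^bsub>K\<^esub>" using that c by simp
    then have "f g \<otimes>\<^bsub>K\<^esub> inv\<^bsub>K\<^esub> f g' = \<one>\<^bsub>K\<^esub>" using that by simp
    then show ?thesis using that f.H.inv_solve_right f.H.l_one f.H.one_closed f.hom_closed by metis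
  qed
  define s where "s q = (SOME g. g \<in> carrier G \<and> p g = q)" for q
  have s: "s q \<in> carrier G \<and> p (s q) = q" if "q \<in> carrier Q" for q
  proof -
    have "q \<in> p ` carrier G" using p(2) that by simp
    then have "\<exists>g. g \<in> carrier G \<and> p g = q" by (auto simp: image_iff)
    then show ?thesis unfolding s_def by (rule someI_ex)
  qed
  define \<theta> where "\<theta> q = f (s q)" for q
  have th: "\<theta> (p g) = f g" if "g \<in> carrier G" for g
  proof -
    have "s (p g) \<in> carrier G" "p (s (p g)) = p g" using s[of "p g"] that by auto
    then show ?thesis unfolding \<theta>_def using wd that by blast
  qed
  have "\<theta> \<in> hom Q K"
  proof (rule homI)
    fix x assume "x \<in> carrier Q" then show "\<theta> x \<in> carrier K" unfolding \<theta>_def using s by auto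
  next
    fix x y assume xy: "x \<in> carrier Q" "y \<in> carrier Q"
    then have "x \<in> p ` carrier G" "y \<in> p ` carrier G" using p(2) by simp_all
    then obtain g h where g: "g \<in> carrier G" "x = p g" and h: "h \<in> carrier G" "y = p h" by (auto simp: image_iff)
    show "\<theta> (x \<otimes>\<^bsub>Q\<^esub> y) = \<theta> x \<otimes>\<^bsub>K\<^esub> \<theta> y"
    proof -
      have "\<theta> (x \<otimes>\<^bsub>Q\<^esub> y) = \<theta> (p (g \<otimes>\<^bsub>G\<^esub> h))" using g h by simp
      also have "\<dots> = f (g \<otimes>\<^bsub>G\<^esub> h)" using g h by (intro th) simp
      also have "\<dots> = f g \<otimes>\<^bsub>K\<^esub> f h" using g h by simp
      also have "\<dots> = \<theta> x \<otimes>\<^bsub>K\<^esub> \<theta> y" using th g h by simp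
      finally show ?thesis .
    qed
  qed
  moreover have "\<theta> ` carrier Q = carrier K"
  proof
    show "\<theta> ` carrier Q \<subseteq> carrier K" unfolding \<theta>_def using s by auto
    show "carrier K \<subseteq> \<theta> ` carrier Q"
    proof
      fix k assume "k \<in> carrier K"
      then have "k \<in> f ` carrier G" using f(2) by simp
      then obtain g where "g \<in> carrier G" "k = f g" by (auto simp: image_iff)
      then show "k \<in> \<theta> ` carrier Q" using th by (metis image_eqI p.hom_closed)
    qed
  qed
  moreover have "kernel Q K \<theta> = p ` kernel G K f"
  proof
    show "kernel Q K \<theta> \<subseteq> p ` kernel G K f"
    proof
      fix x assume "x \<in> kernel Q K \<theta>"
      then have x: "x \<in> carrier Q" "\<theta> x = \<one>\<^bsub>K\<^esub>" by (auto simp: kernel_def)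
      then have "s x \<in> kernel G K f" using s unfolding kernel_def \<theta>_def by auto
      then show "x \<in> p ` kernel G K f" using s x by (metis image_eqI)
    qed
    show "p ` kernel G K f \<subseteq> kernel Q K \<theta>"
      using th by (auto simp: kernel_def)
  qed
  ultimately show ?thesis by blast
qed

definition delta :: "'i set \<Rightarrow> ('t, 'e) monoid_scheme \<Rightarrow> 'i \<Rightarrow> 't \<Rightarrow> ('i \<Rightarrow> 't)"
  where "delta I T i t = (\<lambda>j\<in>I. if j = i then t else \<one>\<^bsub>T\<^esub>)"

lemma delta_hom:
  assumes "group T" "i \<in> I"
  shows "delta I T i \<in> hom T (product_group I (\<lambda>_. T))"
proof (rule homI)
  interpret T: group T by fact
  fix x assume "x \<in> carrier T"
  then show "delta I T i x \<in> carrier (product_group I (\<lambda>_. T))"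
    by (auto simp: delta_def)
next
  interpret T: group T by fact
  fix x y assume "x \<in> carrier T" "y \<in> carrier T"
  then show "delta I T i (x \<otimes>\<^bsub>T\<^esub> y) = delta I T i x \<otimes>\<^bsub>product_group I (\<lambda>_. T)\<^esub> delta I T i y"
    by (auto simp: delta_def fun_eq_iff)
qed

lemma center_trivial:
  assumes "simple_group T" "\<not> comm_group T" "a \<in> carrier T" "a \<noteq> \<one>\<^bsub>T\<^esub>"
  shows "\<exists>t\<in>carrier T. a \<otimes>\<^bsub>T\<^esub> t \<noteq> t \<otimes>\<^bsub>T\<^esub> a"
proof (rule ccontr)
  interpret T: simple_group T by fact
  assume na: "\<not> ?thesis"
  define Z where "Z = {z \<in> carrier T. \<forall>t\<in>carrier T. z \<otimes>\<^bsub>T\<^esub> t = t \<otimes>\<^bsub>T\<^esub> z}"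
  have s1: "Z \<subseteq> carrier T" unfolding Z_def by blast
  have s2: "\<one>\<^bsub>T\<^esub> \<in> Z" unfolding Z_def by simp
  have s3: "x \<otimes>\<^bsub>T\<^esub> y \<in> Z" if x: "x \<in> Z" and y: "y \<in> Z" for x y
    unfolding Z_def
    proof (intro CollectI conjI ballI)
      have xc: "x \<in> carrier T" and yc: "y \<in> carrier T" using x y unfolding Z_def by blast+
      show "x \<otimes>\<^bsub>T\<^esub> y \<in> carrier T" using xc yc by simp
      fix t assume t: "t \<in> carrier T"
      have xz: "x \<otimes>\<^bsub>T\<^esub> s = s \<otimes>\<^bsub>T\<^esub> x" if "s \<in> carrier T" for s using x that unfolding Z_def by blast
      have yz: "y \<otimes>\<^bsub>T\<^esub> s = s \<otimes>\<^bsub>T\<^esub> y" if "s \<in> carrier T" for s using y that unfolding Z_def by blast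
      have "x \<otimes>\<^bsub>T\<^esub> y \<otimes>\<^bsub>T\<^esub> t = x \<otimes>\<^bsub>T\<^esub> (y \<otimes>\<^bsub>T\<^esub> t)" using xc yc t by (simp add: T.m_assoc)
      also have "\<dots> = x \<otimes>\<^bsub>T\<^esub> (t \<otimes>\<^bsub>T\<^esub> y)" by (simp only: yz[OF t])
      also have "\<dots> = (x \<otimes>\<^bsub>T\<^esub> t) \<otimes>\<^bsub>T\<^esub> y" using xc yc t by (simp add: T.m_assoc)
      also have "\<dots> = (t \<otimes>\<^bsub>T\<^esub> x) \<otimes>\<^bsub>T\<^esub> y" by (simp only: xz[OF t])
      also have "\<dots> = t \<otimes>\<^bsub>T\<^esub> (x \<otimes>\<^bsub>T\<^esub> y)" using xc yc t by (simp add: T.m_assoc)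
      finally show "x \<otimes>\<^bsub>T\<^esub> y \<otimes>\<^bsub>T\<^esub> t = t \<otimes>\<^bsub>T\<^esub> (x \<otimes>\<^bsub>T\<^esub> y)" .
    qed
  have s4: "inv\<^bsub>T\<^esub> x \<in> Z" if x: "x \<in> Z" for x
  proof -
    have xc: "x \<in> carrier T" using x unfolding Z_def by blast
    show "inv\<^bsub>T\<^esub> x \<in> Z" unfolding Z_def
    proof (intro CollectI conjI ballI)
      show "inv\<^bsub>T\<^esub> x \<in> carrier T" using xc by simp
      fix t assume t: "t \<in> carrier T"
      have c: "x \<otimes>\<^bsub>T\<^esub> inv\<^bsub>T\<^esub> t = inv\<^bsub>T\<^esub> t \<otimes>\<^bsub>T\<^esub> x" using x t T.inv_closed unfolding Z_def by blast
      have "inv\<^bsub>T\<^esub> x \<otimes>\<^bsub>T\<^esub> t = inv\<^bsub>T\<^esub> (inv\<^bsub>T\<^esub> t \<otimes>\<^bsub>T\<^esub> x)" using xc t by (simp add: T.inv_mult_group)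
      also have "\<dots> = inv\<^bsub>T\<^esub> (x \<otimes>\<^bsub>T\<^esub> inv\<^bsub>T\<^esub> t)" using c by simp
      also have "\<dots> = t \<otimes>\<^bsub>T\<^esub> inv\<^bsub>T\<^esub> x" using xc t by (simp add: T.inv_mult_group)
      finally show "inv\<^bsub>T\<^esub> x \<otimes>\<^bsub>T\<^esub> t = t \<otimes>\<^bsub>T\<^esub> inv\<^bsub>T\<^esub> x" .
    qed
  qed
  have sub: "subgroup Z T"
    by (rule T.subgroupI[OF s1 _ s4 s3]) (use s2 in blast)+
  have "Z \<lhd> T"
    unfolding T.normal_inv_iff
  proof (intro conjI ballI sub)
    fix x h assume x: "x \<in> carrier T" and h: "h \<in> Z"
    have hc: "h \<in> carrier T" using h unfolding Z_def by blast
    have "x \<otimes>\<^bsub>T\<^esub> h \<otimes>\<^bsub>T\<^esub> inv\<^bsub>T\<^esub> x = h \<otimes>\<^bsub>T\<^esub> x \<otimes>\<^bsub>T\<^esub> inv\<^bsub>T\<^esub> x"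
    proof -
      have "h \<otimes>\<^bsub>T\<^esub> x = x \<otimes>\<^bsub>T\<^esub> h" using h x unfolding Z_def by blast
      then show ?thesis by simp
    qed
    also have "\<dots> = h" using x hc by (simp add: T.m_assoc)
    finally show "x \<otimes>\<^bsub>T\<^esub> h \<otimes>\<^bsub>T\<^esub> inv\<^bsub>T\<^esub> x \<in> Z" using h by simp
  qed
  then have "Z = carrier T \<or> Z = {\<one>\<^bsub>T\<^esub>}" by (rule T.no_real_normal_subgroup)
  moreover have "a \<in> Z" using na assms(3) unfolding Z_def by blast
  ultimately have "Z = carrier T" using assms(4) by auto
  then have "comm_group T"
    by (intro T.group_comm_groupI) (use Z_def in blast)
  then show False using assms(2) by simp
qed

lemma classify:
  assumes T: "simple_group T" and nc: "\<not> comm_group T" and I: "finite I"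
    and S: "S \<lhd> product_group I (\<lambda>_. T)"
  defines "A \<equiv> {i\<in>I. \<forall>t\<in>carrier T. delta I T i t \<in> S}"
  shows "S = {f \<in> carrier (product_group I (\<lambda>_. T)). \<forall>i\<in>I - A. f i = \<one>\<^bsub>T\<^esub>}"
proof -
  interpret T: simple_group T by fact
  let ?P = "product_group I (\<lambda>_. T)"
  have P: "group ?P" by (rule product_group) (rule T.group_axioms)
  interpret S: normal S ?P by fact
  have ind: "f \<in> S" if "finite B" "B \<subseteq> A" "f \<in> carrier ?P" "\<forall>i\<in>I-B. f i = \<one>\<^bsub>T\<^esub>" for B f
    using that
  proof (induction B arbitrary: f rule: finite_induct)
    case empty
    have fe: "f \<in> extensional I" using empty.prems(2) by (simp add: PiE_iff)
    have "f = \<one>\<^bsub>?P\<^esub>" unfolding one_product_group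
    proof (rule extensionalityI[OF fe])
      show "(\<lambda>i\<in>I. \<one>\<^bsub>T\<^esub>) \<in> extensional I" by simp
      fix i assume "i \<in> I" then show "f i = (\<lambda>i\<in>I. \<one>\<^bsub>T\<^esub>) i" using empty.prems(3) by simp
    qed
    then show ?case using subgroup.one_closed[OF normal_imp_subgroup[OF S]] by (simp only:)
  next
    case (insert j B)
    have jI: "j \<in> I" "j \<in> A" using insert.prems A_def by auto
    define f' where "f' = f(j := \<one>\<^bsub>T\<^esub>)"
    have f'c: "f' \<in> carrier ?P" using insert.prems jI by (auto simp: f'_def PiE_iff extensional_def)
    have f'1: "\<forall>i\<in>I - B. f' i = \<one>\<^bsub>T\<^esub>" using insert.prems(3) unfolding f'_def by auto
    have f'S: "f' \<in> S" using insert.IH[OF _ f'c f'1] insert.prems(1) by blast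
    have fj: "f j \<in> carrier T" using insert.prems jI by (auto simp: PiE_iff)
    have dS: "delta I T j (f j) \<in> S" using jI fj A_def by auto
    have "f = f' \<otimes>\<^bsub>?P\<^esub> delta I T j (f j)"
    proof (rule extensionalityI)
      show "f \<in> extensional I" using insert.prems(2) by (simp add: PiE_iff)
      show "f' \<otimes>\<^bsub>?P\<^esub> delta I T j (f j) \<in> extensional I" by simp
      fix i assume iI: "i \<in> I"
      have "f i \<in> carrier T" using insert.prems(2) iI by (simp add: PiE_iff)
      then show "f i = (f' \<otimes>\<^bsub>?P\<^esub> delta I T j (f j)) i"
        using iI fj by (cases "i = j") (simp_all add: f'_def delta_def)
    qed
    then show ?case using f'S dS subgroup.m_closed[OF normal_imp_subgroup[OF S]] by metis
  qed
  show ?thesis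
  proof (rule equalityI)
    show "{f \<in> carrier ?P. \<forall>i\<in>I - A. f i = \<one>\<^bsub>T\<^esub>} \<subseteq> S"
    proof
      fix f assume "f \<in> {f \<in> carrier ?P. \<forall>i\<in>I - A. f i = \<one>\<^bsub>T\<^esub>}"
      moreover have "finite A" "A \<subseteq> A" using I A_def by (auto intro: finite_subset)
      ultimately show "f \<in> S" using ind by blast
    qed
  next
    show "S \<subseteq> {f \<in> carrier ?P. \<forall>i\<in>I - A. f i = \<one>\<^bsub>T\<^esub>}"
    proof
      fix f assume fS: "f \<in> S"
      have fc: "f \<in> carrier ?P" using fS S.subset by blast
      have "f i = \<one>\<^bsub>T\<^esub>" if i: "i \<in> I" "i \<notin> A" for i
      proof (rule ccontr)
        assume ne: "f i \<noteq> \<one>\<^bsub>T\<^esub>"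
        have fi: "f i \<in> carrier T" using fc i by (auto simp: PiE_iff)
        define U where "U = {t \<in> carrier T. delta I T i t \<in> S}"
        have gh: "group_hom T ?P (delta I T i)"
          using delta_hom[OF T.group_axioms i(1)] P T.group_axioms
          by (simp add: group_hom_def group_hom_axioms_def)
        have "U \<lhd> T" unfolding U_def by (rule preimage_normal[OF gh S])
        then have "U = carrier T \<or> U = {\<one>\<^bsub>T\<^esub>}" by (rule T.no_real_normal_subgroup)
        moreover have "U \<noteq> carrier T" using i A_def U_def by auto
        ultimately have U1: "U = {\<one>\<^bsub>T\<^esub>}" by blast
        obtain t where t: "t \<in> carrier T" "f i \<otimes>\<^bsub>T\<^esub> t \<noteq> t \<otimes>\<^bsub>T\<^esub> f i"
          using center_trivial[OF T nc fi ne] by blast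
        define d where "d = delta I T i t"
        have dc: "d \<in> carrier ?P" using t by (auto simp: d_def delta_def)
        have "inv\<^bsub>?P\<^esub> f \<in> S" using fS by (rule S.m_inv_closed)
        then have "d \<otimes>\<^bsub>?P\<^esub> inv\<^bsub>?P\<^esub> f \<otimes>\<^bsub>?P\<^esub> inv\<^bsub>?P\<^esub> d \<in> S"
          using dc by (rule S.inv_op_closed2[rotated])
        then have cS: "f \<otimes>\<^bsub>?P\<^esub> (d \<otimes>\<^bsub>?P\<^esub> inv\<^bsub>?P\<^esub> f \<otimes>\<^bsub>?P\<^esub> inv\<^bsub>?P\<^esub> d) \<in> S"
          using fS S.m_closed by blast
        define u where "u = f i \<otimes>\<^bsub>T\<^esub> (t \<otimes>\<^bsub>T\<^esub> inv\<^bsub>T\<^esub> (f i) \<otimes>\<^bsub>T\<^esub> inv\<^bsub>T\<^esub> t)"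
        have "f \<otimes>\<^bsub>?P\<^esub> (d \<otimes>\<^bsub>?P\<^esub> inv\<^bsub>?P\<^esub> f \<otimes>\<^bsub>?P\<^esub> inv\<^bsub>?P\<^esub> d) = delta I T i u"
        proof (rule ext)
          fix j
          show "(f \<otimes>\<^bsub>?P\<^esub> (d \<otimes>\<^bsub>?P\<^esub> inv\<^bsub>?P\<^esub> f \<otimes>\<^bsub>?P\<^esub> inv\<^bsub>?P\<^esub> d)) j = delta I T i u j"
            using fc dc t fi
            by (cases "j \<in> I"; cases "j = i") (auto simp: d_def delta_def u_def PiE_iff T.group_axioms)
        qed
        then have "u \<in> U" using cS t fi unfolding U_def u_def by simp
        then have "u = \<one>\<^bsub>T\<^esub>" using U1 by blast
        moreover have "u = (f i \<otimes>\<^bsub>T\<^esub> t) \<otimes>\<^bsub>T\<^esub> inv\<^bsub>T\<^esub> (t \<otimes>\<^bsub>T\<^esub> f i)"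
          using t fi by (simp add: u_def T.inv_mult_group T.m_assoc)
        ultimately have "f i \<otimes>\<^bsub>T\<^esub> t = t \<otimes>\<^bsub>T\<^esub> f i"
          using t fi T.inv_solve_right T.l_one T.one_closed T.m_closed by metis
        then show False using t by blast
      qed
      then show "f \<in> {f \<in> carrier ?P. \<forall>i\<in>I - A. f i = \<one>\<^bsub>T\<^esub>}" using fc by blast
    qed
  qed
qed

lemma reindex:
  fixes T :: "('t, 'e) monoid_scheme" and I J :: "'i set"
  assumes T: "group T" and JI: "J \<subseteq> I" and J: "finite J"
  shows "\<exists>\<rho>. \<rho> \<in> hom (product_group I (\<lambda>_. T)) (power_group T (card J))
     \<and> \<rho> ` carrier (product_group I (\<lambda>_. T)) = carrier (power_group T (card J))
     \<and> kernel (product_group I (\<lambda>_. T)) (power_group T (card J)) \<rho>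
         = {f \<in> carrier (product_group I (\<lambda>_. T)). \<forall>i\<in>J. f i = \<one>\<^bsub>T\<^esub>}"
proof -
  interpret T: group T by fact
  let ?P = "product_group I (\<lambda>_. T)"
  let ?Q = "power_group T (card J)"
  let ?n = "card J"
  obtain e where e: "bij_betw e {..<?n} J"
    using ex_bij_betw_nat_finite[OF J] by (auto simp: atLeast0LessThan)
  have eJ: "e k \<in> J" if "k < ?n" for k using e that by (auto simp: bij_betw_def)
  have eI: "e k \<in> I" if "k < ?n" for k using eJ that JI by blast
  have einj: "inj_on e {..<?n}" and eim: "e ` {..<?n} = J" using e by (auto simp: bij_betw_def)
  define \<rho> where "\<rho> f = (\<lambda>k\<in>{..<?n}. f (e k))" for f :: "_ \<Rightarrow> 't"
  have hom: "\<rho> \<in> hom ?P ?Q"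
  proof (rule homI)
    fix f assume f: "f \<in> carrier ?P"
    show "\<rho> f \<in> carrier ?Q" using f eI by (auto simp: \<rho>_def PiE_iff)
  next
    fix f g assume f: "f \<in> carrier ?P" and g: "g \<in> carrier ?P"
    show "\<rho> (f \<otimes>\<^bsub>?P\<^esub> g) = \<rho> f \<otimes>\<^bsub>?Q\<^esub> \<rho> g"
      unfolding \<rho>_def using eI by (auto simp: fun_eq_iff)
  qed
  have surj: "\<rho> ` carrier ?P = carrier ?Q"
  proof
    show "\<rho> ` carrier ?P \<subseteq> carrier ?Q" using hom by (auto simp: hom_def)
    show "carrier ?Q \<subseteq> \<rho> ` carrier ?P"
    proof
      fix g assume g: "g \<in> carrier ?Q"
      define f where "f = (\<lambda>i\<in>I. if i \<in> J then g (inv_into {..<?n} e i) else \<one>\<^bsub>T\<^esub>)"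
      have inv_lt: "inv_into {..<?n} e i < ?n" if "i \<in> J" for i
        using inv_into_into[of i e "{..<?n}"] that eim by auto
      have fc: "f \<in> carrier ?P"
      proof (simp add: f_def PiE_iff, intro ballI impI)
        fix i assume "i \<in> J"
        then show "g (inv_into {..<?n} e i) \<in> carrier T" using g inv_lt by (auto simp: PiE_iff)
      qed
      have "\<rho> f = g"
      proof (rule extensionalityI)
        show "\<rho> f \<in> extensional {..<?n}" unfolding \<rho>_def by simp
        show "g \<in> extensional {..<?n}" using g by (simp add: PiE_iff)
        fix k assume k: "k \<in> {..<?n}"
        then have "inv_into {..<?n} e (e k) = k" using einj by (simp add: inv_into_f_f)
        then show "\<rho> f k = g k" using k eI eJ unfolding \<rho>_def f_def by simp
      qed
      then show "g \<in> \<rho> ` carrier ?P" using fc by blast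
    qed
  qed
  have ker: "kernel ?P ?Q \<rho> = {f \<in> carrier ?P. \<forall>i\<in>J. f i = \<one>\<^bsub>T\<^esub>}"
  proof -
    have "\<rho> f = \<one>\<^bsub>?Q\<^esub> \<longleftrightarrow> (\<forall>i\<in>J. f i = \<one>\<^bsub>T\<^esub>)" for f
    proof -
      have "\<rho> f = \<one>\<^bsub>?Q\<^esub> \<longleftrightarrow> (\<forall>k<?n. f (e k) = \<one>\<^bsub>T\<^esub>)"
        unfolding \<rho>_def by (auto simp: fun_eq_iff restrict_def)
      also have "\<dots> \<longleftrightarrow> (\<forall>i\<in>J. f i = \<one>\<^bsub>T\<^esub>)" using eim eJ by (metis imageE lessThan_iff)
      finally show ?thesis .
    qed
    then show ?thesis unfolding kernel_def by blast
  qed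
  show ?thesis using hom surj ker by blast
qed

lemma side:
  fixes G :: "('g, 'm) monoid_scheme" and Q :: "('q, 'n) monoid_scheme"
    and T :: "('t, 'e) monoid_scheme"
  assumes G: "group G" and Q: "group Q" and T: "simple_group T" and nc: "\<not> comm_group T"
    and N: "N \<lhd> G"
    and psi: "\<psi> \<in> hom G (power_group T l)" "\<psi> ` carrier G = carrier (power_group T l)"
      "kernel G (power_group T l) \<psi> = N"
    and p: "p \<in> hom G Q" "p ` carrier G = carrier Q"
  defines "A \<equiv> {i \<in> {..<l}. \<forall>t\<in>carrier T. delta {..<l} T i t \<in> \<psi> ` {g \<in> carrier G. p g \<in> p ` N}}"
  shows "Q Mod (p ` N) \<cong> power_group T (card ({..<l} - A))"
proof -
  let ?P = "power_group T l"
  let ?I = "{..<l::nat}"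
  let ?K = "power_group T (card (?I - A))"
  interpret T: simple_group T by fact
  interpret G: group G by fact
  interpret Q: group Q by fact
  have Pg: "group ?P" by (rule product_group) (rule T.group_axioms)
  have Kg: "group ?K" by (rule product_group) (rule T.group_axioms)
  have gp: "group_hom G Q p" using G Q p by (simp add: group_hom_def group_hom_axioms_def)
  have gpsi: "group_hom G ?P \<psi>" using G Pg psi by (simp add: group_hom_def group_hom_axioms_def)
  define M where "M = {g \<in> carrier G. p g \<in> p ` N}"
  have pN: "p ` N \<lhd> Q" using normal.surj_hom_normal_subgroup[OF N gp p(2)] .
  have M: "M \<lhd> G" unfolding M_def by (rule preimage_normal[OF gp pN])
  have Nsub: "subgroup N G" using normal_imp_subgroup[OF N] .
  have NM: "N \<subseteq> M" using subgroup.subset[OF Nsub] unfolding M_def by auto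
  have SP: "\<psi> ` M \<lhd> ?P" using normal.surj_hom_normal_subgroup[OF M gpsi psi(2)] .
  have cls: "\<psi> ` M = {f \<in> carrier ?P. \<forall>i\<in>?I - A. f i = \<one>\<^bsub>T\<^esub>}"
    using classify[OF T nc _ SP] unfolding A_def M_def by simp
  obtain \<rho> where \<rho>: "\<rho> \<in> hom ?P ?K" "\<rho> ` carrier ?P = carrier ?K"
    "kernel ?P ?K \<rho> = {f \<in> carrier ?P. \<forall>i\<in>?I - A. f i = \<one>\<^bsub>T\<^esub>}"
    using reindex[OF T.group_axioms, of "?I - A" ?I] by auto
  define \<Phi> where "\<Phi> = \<rho> \<circ> \<psi>"
  have \<Phi>hom: "\<Phi> \<in> hom G ?K" unfolding \<Phi>_def by (rule hom_compose[OF psi(1) \<rho>(1)])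
  have "\<Phi> ` carrier G = \<rho> ` (\<psi> ` carrier G)" unfolding \<Phi>_def by (rule image_comp[symmetric])
  also have "\<dots> = carrier ?K" by (simp only: psi(2) \<rho>(2))
  finally have \<Phi>surj: "\<Phi> ` carrier G = carrier ?K" .
  have inM: "g \<in> M" if g: "g \<in> carrier G" "\<psi> g \<in> \<psi> ` M" for g
  proof -
    obtain m where m: "m \<in> M" "\<psi> g = \<psi> m" using g by blast
    have mc: "m \<in> carrier G" using m M_def by blast
    interpret psi: group_hom G ?P \<psi> by (rule gpsi)
    have "\<psi> (g \<otimes>\<^bsub>G\<^esub> inv\<^bsub>G\<^esub> m) = \<psi> g \<otimes>\<^bsub>?P\<^esub> inv\<^bsub>?P\<^esub> \<psi> m"
      by (simp only: psi.hom_mult[OF g(1) G.inv_closed[OF mc]] psi.hom_inv[OF mc])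
    also have "\<dots> = \<psi> m \<otimes>\<^bsub>?P\<^esub> inv\<^bsub>?P\<^esub> \<psi> m" by (simp only: m(2))
    also have "\<dots> = \<one>\<^bsub>?P\<^esub>" using mc by (intro group.r_inv[OF Pg] psi.hom_closed)
    finally have "\<psi> (g \<otimes>\<^bsub>G\<^esub> inv\<^bsub>G\<^esub> m) = \<one>\<^bsub>?P\<^esub>" .
    then have "g \<otimes>\<^bsub>G\<^esub> inv\<^bsub>G\<^esub> m \<in> N" using psi(3) g mc unfolding kernel_def by blast
    then have "g \<otimes>\<^bsub>G\<^esub> inv\<^bsub>G\<^esub> m \<in> M" using NM by blast
    then have "(g \<otimes>\<^bsub>G\<^esub> inv\<^bsub>G\<^esub> m) \<otimes>\<^bsub>G\<^esub> m \<in> M"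
      using m(1) subgroup.m_closed[OF normal_imp_subgroup[OF M]] by blast
    moreover have "(g \<otimes>\<^bsub>G\<^esub> inv\<^bsub>G\<^esub> m) \<otimes>\<^bsub>G\<^esub> m = g" using g mc by (simp add: G.m_assoc)
    ultimately show ?thesis by simp
  qed
  have \<Phi>ker: "kernel G ?K \<Phi> = M"
  proof -
    have "\<Phi> g = \<one>\<^bsub>?K\<^esub> \<longleftrightarrow> g \<in> M" if g: "g \<in> carrier G" for g
    proof -
      have pg: "\<psi> g \<in> carrier ?P" using psi(1) g by (auto simp: hom_def)
      have "\<Phi> g = \<one>\<^bsub>?K\<^esub> \<longleftrightarrow> \<psi> g \<in> kernel ?P ?K \<rho>" using pg unfolding kernel_def \<Phi>_def by simp
      also have "\<dots> \<longleftrightarrow> \<psi> g \<in> \<psi> ` M" using \<rho>(3) cls by simp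
      also have "\<dots> \<longleftrightarrow> g \<in> M" using inM g by blast
      finally show ?thesis .
    qed
    moreover have "M \<subseteq> carrier G" unfolding M_def by blast
    ultimately show ?thesis unfolding kernel_def by blast
  qed
  have cond: "\<Phi> g = \<one>\<^bsub>?K\<^esub>" if "g \<in> carrier G" "p g = \<one>\<^bsub>Q\<^esub>" for g
  proof -
    have "\<one>\<^bsub>G\<^esub> \<in> N" using subgroup.one_closed[OF Nsub] .
    moreover have "p \<one>\<^bsub>G\<^esub> = \<one>\<^bsub>Q\<^esub>" using group_hom.hom_one[OF gp] .
    ultimately have "g \<in> M" using that unfolding M_def by (metis image_eqI mem_Collect_eq)
    then show ?thesis using \<Phi>ker unfolding kernel_def by blast
  qed
  obtain \<theta> where th: "\<theta> \<in> hom Q ?K" "\<theta> ` carrier Q = carrier ?K"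
    "kernel Q ?K \<theta> = p ` kernel G ?K \<Phi>"
    using descent[OF G Q Kg p \<Phi>hom \<Phi>surj cond] by blast
  have "p ` kernel G ?K \<Phi> = p ` N" unfolding \<Phi>ker
  proof
    show "p ` M \<subseteq> p ` N" unfolding M_def by blast
    show "p ` N \<subseteq> p ` M" using NM by blast
  qed
  then have ker: "kernel Q ?K \<theta> = p ` N" using th(3) by simp
  have gth: "group_hom Q ?K \<theta>" using Q Kg th(1) by (simp add: group_hom_def group_hom_axioms_def)
  show ?thesis using group_hom.FactGroup_iso[OF gth th(2)] ker by simp
qed

lemma lift:
  assumes G: "group G" and Q: "group Q" and T: "group T"
    and psi: "\<psi> \<in> hom G (power_group T l)" "kernel G (power_group T l) \<psi> = N"
    and p: "p \<in> hom G Q"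
    and x: "x \<in> \<psi> ` {g \<in> carrier G. p g \<in> p ` N}"
  shows "\<exists>h\<in>carrier G. p h = \<one>\<^bsub>Q\<^esub> \<and> \<psi> h = x"
proof -
  let ?P = "power_group T l"
  have Pg: "group ?P" by (rule product_group) (rule T)
  interpret G: group G by fact
  interpret psi: group_hom G ?P \<psi> using G Pg psi by (simp add: group_hom_def group_hom_axioms_def)
  interpret p: group_hom G Q p using G Q p by (simp add: group_hom_def group_hom_axioms_def)
  obtain h n where h: "h \<in> carrier G" "\<psi> h = x" "n \<in> N" "p h = p n" using x by blast
  have n: "n \<in> carrier G" "\<psi> n = \<one>\<^bsub>?P\<^esub>" using h(3) psi(2) unfolding kernel_def by auto
  define h' where "h' = h \<otimes>\<^bsub>G\<^esub> inv\<^bsub>G\<^esub> n"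
  have h'c: "h' \<in> carrier G" unfolding h'_def using h n by simp
  have "p h' = p h \<otimes>\<^bsub>Q\<^esub> inv\<^bsub>Q\<^esub> p n" unfolding h'_def using h n by simp
  also have "\<dots> = \<one>\<^bsub>Q\<^esub>" using h(4) n by simp
  finally have ph': "p h' = \<one>\<^bsub>Q\<^esub>" .
  have "\<psi> h' = \<psi> h \<otimes>\<^bsub>?P\<^esub> inv\<^bsub>?P\<^esub> \<psi> n"
    unfolding h'_def by (simp only: psi.hom_mult[OF h(1) G.inv_closed[OF n(1)]] psi.hom_inv[OF n(1)])
  also have "\<dots> = \<psi> h \<otimes>\<^bsub>?P\<^esub> \<one>\<^bsub>?P\<^esub>" by (simp only: n(2) psi.H.inv_one)
  also have "\<dots> = \<psi> h" by (rule psi.H.r_one[OF psi.hom_closed[OF h(1)]])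
  finally show ?thesis using h'c ph' h(2) by blast
qed

lemma disjoint:
  assumes G: "group G" and Q1: "group Q1" and Q2: "group Q2" and T: "group T" and nc: "\<not> comm_group T"
    and psi: "\<psi> \<in> hom G (power_group T l)" "kernel G (power_group T l) \<psi> = N"
    and p1: "p1 \<in> hom G Q1" and p2: "p2 \<in> hom G Q2"
    and comm: "\<And>x y. x \<in> carrier G \<Longrightarrow> y \<in> carrier G \<Longrightarrow> p1 x = \<one>\<^bsub>Q1\<^esub> \<Longrightarrow> p2 y = \<one>\<^bsub>Q2\<^esub>
                 \<Longrightarrow> x \<otimes>\<^bsub>G\<^esub> y = y \<otimes>\<^bsub>G\<^esub> x"
    and i1: "\<forall>t\<in>carrier T. delta {..<l} T i t \<in> \<psi> ` {g \<in> carrier G. p1 g \<in> p1 ` N}"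
    and i2: "\<forall>t\<in>carrier T. delta {..<l} T i t \<in> \<psi> ` {g \<in> carrier G. p2 g \<in> p2 ` N}"
    and i: "i < l"
  shows False
proof -
  let ?P = "power_group T l"
  interpret T: group T by fact
  have Pg: "group ?P" by (rule product_group) (rule T)
  interpret psi: group_hom G ?P \<psi> using G Pg psi by (simp add: group_hom_def group_hom_axioms_def)
  obtain a b where ab: "a \<in> carrier T" "b \<in> carrier T" "a \<otimes>\<^bsub>T\<^esub> b \<noteq> b \<otimes>\<^bsub>T\<^esub> a"
  proof -
    have "\<exists>a\<in>carrier T. \<exists>b\<in>carrier T. a \<otimes>\<^bsub>T\<^esub> b \<noteq> b \<otimes>\<^bsub>T\<^esub> a"
    proof (rule ccontr)
      assume "\<not> ?thesis"
      then have "comm_group T" by (intro T.group_comm_groupI) blast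
      then show False using nc by blast
    qed
    then show ?thesis using that by blast
  qed
  obtain x where x: "x \<in> carrier G" "p1 x = \<one>\<^bsub>Q1\<^esub>" "\<psi> x = delta {..<l} T i a"
    using lift[OF G Q1 T psi p1 bspec[OF i1 ab(1)]] by blast
  obtain y where y: "y \<in> carrier G" "p2 y = \<one>\<^bsub>Q2\<^esub>" "\<psi> y = delta {..<l} T i b"
    using lift[OF G Q2 T psi p2 bspec[OF i2 ab(2)]] by blast
  have "\<psi> (x \<otimes>\<^bsub>G\<^esub> y) = \<psi> (y \<otimes>\<^bsub>G\<^esub> x)" using comm[OF x(1) y(1) x(2) y(2)] by (rule arg_cong)
  then have "\<psi> x \<otimes>\<^bsub>?P\<^esub> \<psi> y = \<psi> y \<otimes>\<^bsub>?P\<^esub> \<psi> x"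
    by (simp only: psi.hom_mult[OF x(1) y(1)] psi.hom_mult[OF y(1) x(1)])
  then have "(\<psi> x \<otimes>\<^bsub>?P\<^esub> \<psi> y) i = (\<psi> y \<otimes>\<^bsub>?P\<^esub> \<psi> x) i" by (rule fun_cong)
  moreover have "(\<psi> x \<otimes>\<^bsub>?P\<^esub> \<psi> y) i = a \<otimes>\<^bsub>T\<^esub> b" unfolding x(3) y(3) using i by (simp add: delta_def)
  moreover have "(\<psi> y \<otimes>\<^bsub>?P\<^esub> \<psi> x) i = b \<otimes>\<^bsub>T\<^esub> a" unfolding x(3) y(3) using i by (simp add: delta_def)
  ultimately have "a \<otimes>\<^bsub>T\<^esub> b = b \<otimes>\<^bsub>T\<^esub> a" by simp
  then show False using ab(3) by blast
qed


theorem lemma2p5: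
  fixes H1 :: "('a, 'c) monoid_scheme" and H2 :: "('b, 'd) monoid_scheme"
    and T :: "('t, 'e) monoid_scheme"
    and H N :: "('a \<times> 'b) set" and l :: nat
  assumes "group H1" and "group H2"
    and "subgroup H (H1 \<times>\<times> H2)"
    and "fst ` H = carrier H1" and "snd ` H = carrier H2"
    and "N \<lhd> ((H1 \<times>\<times> H2)\<lparr>carrier := H\<rparr>)"
    and "solvable ((H1 \<times>\<times> H2)\<lparr>carrier := N\<rparr>)"
    and "simple_group T" and "\<not> comm_group T"
    and "l > 0"
    and "((H1 \<times>\<times> H2)\<lparr>carrier := H\<rparr>) Mod N \<cong> power_group T l"
  shows "\<exists>l1 l2 :: nat. l1 + l2 \<ge> l
           \<and> H1 Mod (fst ` N) \<cong> power_group T l1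
           \<and> H2 Mod (snd ` N) \<cong> power_group T l2"
proof -
  let ?D = "H1 \<times>\<times> H2"
  let ?G = "?D\<lparr>carrier := H\<rparr>"
  let ?P = "power_group T l"
  let ?I = "{..<l}"
  interpret T: simple_group T by fact
  interpret H1: group H1 by fact
  interpret H2: group H2 by fact
  have Dg: "group ?D" using DirProd_group assms(1,2) by blast
  have Gg: "group ?G" using group.subgroup_imp_group[OF Dg assms(3)] .
  have Hsub: "H \<subseteq> carrier H1 \<times> carrier H2" using subgroup.subset[OF assms(3)] by simp
  obtain \<phi> where \<phi>: "\<phi> \<in> iso (?G Mod N) ?P" using assms(11) unfolding is_iso_def by blast
  interpret Nn: normal N ?G by (rule assms(6))
  have Pg: "group ?P" by (rule product_group) (rule T.group_axioms)
  have Mg: "group (?G Mod N)" by (rule Nn.factorgroup_is_group)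
  have \<phi>hom: "\<phi> \<in> hom (?G Mod N) ?P" and \<phi>bij: "bij_betw \<phi> (carrier (?G Mod N)) (carrier ?P)"
    using \<phi> by (auto simp: iso_def)
  have g\<phi>: "group_hom (?G Mod N) ?P \<phi>" using Mg Pg \<phi>hom by (simp add: group_hom_def group_hom_axioms_def)
  define \<psi> where "\<psi> = \<phi> \<circ> (\<lambda>h. N #>\<^bsub>?G\<^esub> h)"
  have \<psi>hom: "\<psi> \<in> hom ?G ?P" unfolding \<psi>_def by (rule hom_compose[OF Nn.r_coset_hom_Mod \<phi>hom])
  have cosets: "(\<lambda>h. N #>\<^bsub>?G\<^esub> h) ` carrier ?G = carrier (?G Mod N)" by (simp add: carrier_FactGroup)
  have "\<psi> ` carrier ?G = \<phi> ` ((\<lambda>h. N #>\<^bsub>?G\<^esub> h) ` carrier ?G)" unfolding \<psi>_def by (rule image_comp[symmetric])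
  also have "\<dots> = carrier ?P" unfolding cosets using \<phi>bij by (simp add: bij_betw_def)
  finally have \<psi>surj: "\<psi> ` carrier ?G = carrier ?P" .
  have \<psi>ker: "kernel ?G ?P \<psi> = N"
  proof -
    have "\<psi> h = \<one>\<^bsub>?P\<^esub> \<longleftrightarrow> h \<in> N" if h: "h \<in> carrier ?G" for h
    proof -
      have c1: "N #>\<^bsub>?G\<^esub> h \<in> carrier (?G Mod N)" using cosets h by blast
      have c2: "N \<in> carrier (?G Mod N)" using monoid.one_closed[OF group.is_monoid[OF Mg]] by simp
      have one: "\<phi> N = \<one>\<^bsub>?P\<^esub>" using group_hom.hom_one[OF g\<phi>] by simp
      have inj: "inj_on \<phi> (carrier (?G Mod N))" using \<phi>bij by (simp add: bij_betw_def)
      have "\<psi> h = \<one>\<^bsub>?P\<^esub> \<longleftrightarrow> \<phi> (N #>\<^bsub>?G\<^esub> h) = \<phi> N" unfolding \<psi>_def one by simp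
      also have "\<dots> \<longleftrightarrow> N #>\<^bsub>?G\<^esub> h = N" by (rule inj_on_eq_iff[OF inj c1 c2])
      also have "\<dots> \<longleftrightarrow> h \<in> N"
        using group.coset_join1[OF Gg, of N h] group.coset_join2[OF Gg, of h N] Nn.subgroup_axioms h by blast
      finally show ?thesis .
    qed
    moreover have "N \<subseteq> carrier ?G" using Nn.subset .
    ultimately show ?thesis unfolding kernel_def by blast
  qed
  have fsthom: "fst \<in> hom ?G H1"
  proof (rule homI)
    fix x assume "x \<in> carrier ?G" then show "fst x \<in> carrier H1" using Hsub by auto
  next
    fix x y assume "x \<in> carrier ?G" "y \<in> carrier ?G"
    then show "fst (x \<otimes>\<^bsub>?G\<^esub> y) = fst x \<otimes>\<^bsub>H1\<^esub> fst y" by (simp add: mult_DirProd')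
  qed
  have sndhom: "snd \<in> hom ?G H2"
  proof (rule homI)
    fix x assume "x \<in> carrier ?G" then show "snd x \<in> carrier H2" using Hsub by auto
  next
    fix x y assume "x \<in> carrier ?G" "y \<in> carrier ?G"
    then show "snd (x \<otimes>\<^bsub>?G\<^esub> y) = snd x \<otimes>\<^bsub>H2\<^esub> snd y" by (simp add: mult_DirProd')
  qed
  have fstsurj: "fst ` carrier ?G = carrier H1" using assms(4) by simp
  have sndsurj: "snd ` carrier ?G = carrier H2" using assms(5) by simp
  define A1 where "A1 = {i \<in> ?I. \<forall>t\<in>carrier T. delta ?I T i t \<in> \<psi> ` {g \<in> carrier ?G. fst g \<in> fst ` N}}"
  define A2 where "A2 = {i \<in> ?I. \<forall>t\<in>carrier T. delta ?I T i t \<in> \<psi> ` {g \<in> carrier ?G. snd g \<in> snd ` N}}"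
  have s1: "H1 Mod (fst ` N) \<cong> power_group T (card (?I - A1))"
    unfolding A1_def by (rule side[OF Gg assms(1) assms(8) assms(9) assms(6) \<psi>hom \<psi>surj \<psi>ker fsthom fstsurj])
  have s2: "H2 Mod (snd ` N) \<cong> power_group T (card (?I - A2))"
    unfolding A2_def by (rule side[OF Gg assms(2) assms(8) assms(9) assms(6) \<psi>hom \<psi>surj \<psi>ker sndhom sndsurj])
  have comm: "x \<otimes>\<^bsub>?G\<^esub> y = y \<otimes>\<^bsub>?G\<^esub> x"
    if "x \<in> carrier ?G" "y \<in> carrier ?G" "fst x = \<one>\<^bsub>H1\<^esub>" "snd y = \<one>\<^bsub>H2\<^esub>" for x y
  proof -
    have "fst y \<in> carrier H1" "snd x \<in> carrier H2" using that Hsub by auto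
    then show ?thesis using that by (simp add: mult_DirProd')
  qed
  have disj: "i \<notin> A1 \<inter> A2" for i
  proof
    assume i: "i \<in> A1 \<inter> A2"
    show False
      by (rule disjoint[OF Gg assms(1) assms(2) T.group_axioms assms(9) \<psi>hom \<psi>ker fsthom sndhom comm])
         (use i A1_def A2_def in auto)
  qed
  have "?I \<subseteq> (?I - A1) \<union> (?I - A2)" using disj by blast
  then have "card ?I \<le> card ((?I - A1) \<union> (?I - A2))" by (intro card_mono) auto
  also have "\<dots> \<le> card (?I - A1) + card (?I - A2)" by (rule card_Un_le)
  finally have "l \<le> card (?I - A1) + card (?I - A2)" by simp
  then show ?thesis using s1 s2 by blast
qed

end
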